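(* In the setting described in the context, suppose that the nearest neighbour recurrence coefficients satisfy \[ \max_{1\le i\le r}\sup_{\ell\ge0}|a_{\vec n_\ell,i}|<\infty \quad\text{and}\quad \max_{1\le i\le r}\sup_{\vec n\in\mathbb{N}_0^r}|b_{\vec n,i}|<\infty. \] Then the matrix $J$ associated with the path $(\vec n_\ell)$ satisfies $\sup_{|i-j|\le R}|J_{i,j}|<\infty$ for every $R\ge0$.
   Context: Let $r\ge1$ and let $\mu_1,\dots,\mu_r$ be positive Borel measures on $\mathbb{R}$ with all moments finite, forming a perfect system: for every $\vec n\in\mathbb{N}_0^r$ there is a monic polynomial $P_{\vec n}$ of degree $|\vec n|=n_1+\dots+n_r$ with $\int x^kP_{\vec n}\,d\mu_j=0$ for $0\le k\le n_j-1$, $1\le j\le r$. These satisfy the nearest neighbour recurrence relations $xP_{\vec n}(x)=P_{\vec n+\vec e_k}(x)+b_{\vec n,k}P_{\vec n}(x)+\sum_{j=1}^ra_{\vec n,j}P_{\vec n-\vec e_j}(x)$, $1\le k\le r$, with real coefficients $a_{\vec n,j},b_{\vec n,k}$ ($\vec e_j$ the $j$-th unit vector). Fix a path $(\vec n_\ell)_{\ell\ge0}$ with $|\vec n_\ell|=\ell$ and $\vec n_{\ell+1}=\vec n_\ell+\vec e_{i_\ell}$, $i_\ell\in\{1,\dots,r\}$, and set $p_\ell=P_{\vec n_\ell}$. The matrix $J=[J_{\ell,k}]_{\ell,k\ge0}$ is defined by $xp_\ell=\sum_{k=0}^{\ell+1}J_{\ell,k}p_k$, with $J_{\ell,k}=0$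 for $k>\ell+1$. *)

theory Defs
  imports "HOL-Analysis.Analysis" "HOL-Computational_Algebra.Polynomial"
begin

text \<open>Multi-indices in N_0^r are represented as functions nat => nat that vanish
outside {1..r}.\<close>

definition mindex :: "nat \<Rightarrow> (nat \<Rightarrow> nat) set" where
  "mindex r = {n. \<forall>i. i \<notin> {1..r} \<longrightarrow> n i = 0}"

definition mlen :: "nat \<Rightarrow> (nat \<Rightarrow> nat) \<Rightarrow> nat" where
  "mlen r n = (\<Sum>i=1..r. n i)"

definition unitv :: "nat \<Rightarrow> nat \<Rightarrow> nat" where
  "unitv j = (\<lambda>i. if i = j then 1 else 0)"

definition is_type2_mop ::
  "(nat \<Rightarrow> real measure) \<Rightarrow> nat \<Rightarrow> (nat \<Rightarrow> nat) \<Rightarrow> real poly \<Rightarrow> bool" where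
  "is_type2_mop \<mu> r n P \<longleftrightarrow>
     lead_coeff P = 1 \<and> degree P = mlen r n \<and>
     (\<forall>j\<in>{1..r}. \<forall>k<n j. (\<integral>x. x ^ k * poly P x \<partial>\<mu> j) = 0)"

definition perfect_system :: "(nat \<Rightarrow> real measure) \<Rightarrow> nat \<Rightarrow> bool" where
  "perfect_system \<mu> r \<longleftrightarrow> (\<forall>n\<in>mindex r. \<exists>!P. is_type2_mop \<mu> r n P)"

definition mop :: "(nat \<Rightarrow> real measure) \<Rightarrow> nat \<Rightarrow> (nat \<Rightarrow> nat) \<Rightarrow> real poly" where
  "mop \<mu> r n = (THE P. is_type2_mop \<mu> r n P)"

end

theory Submission
  imports Defs
begin

lemma smult_sum2: "smult c (\<Sum>x\<in>A. f x) = (\<Sum>x\<in>A. smult c (f x))"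
  by (induction A rule: infinite_finite_induct) (auto simp: smult_add_right)

lemma aux_eq: "(x::'a::ab_group_add) + s1 = y + s2 \<Longrightarrow> x = y + (s2 - s1)"
  by (simp add: algebra_simps)

lemma basis_zero:
  fixes p :: "nat \<Rightarrow> real poly"
  assumes deg: "\<And>k. degree (p k) = k" and nz: "\<And>k. p k \<noteq> 0"
  shows "(\<Sum>k\<le>n. smult (w k) (p k)) = 0 \<Longrightarrow> k \<le> n \<Longrightarrow> w k = 0"
proof (induction n arbitrary: k)
  case 0
  then show ?case using nz by simp
next
  case (Suc n)
  have c0: "coeff (\<Sum>k\<le>n. smult (w k) (p k)) (Suc n) = 0"
    unfolding coeff_sum by (intro sum.neutral) (auto simp: deg coeff_eq_0)
  have "coeff (\<Sum>k\<le>Suc n. smult (w k) (p k)) (Suc n) = 0" using Suc.prems by simp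
  hence "w (Suc n) * lead_coeff (p (Suc n)) = 0" using c0 by (simp add: deg)
  hence ws: "w (Suc n) = 0" using nz by simp
  hence "(\<Sum>k\<le>n. smult (w k) (p k)) = 0" using Suc.prems by simp
  then show ?case using Suc ws by (cases "k = Suc n") auto
qed

lemma basis_unique:
  fixes p :: "nat \<Rightarrow> real poly"
  assumes deg: "\<And>k. degree (p k) = k" and nz: "\<And>k. p k \<noteq> 0"
    and eq: "(\<Sum>k\<le>n. smult (u k) (p k)) = (\<Sum>k\<le>n. smult (v k) (p k))" and k: "k \<le> n"
  shows "u k = v k"
proof -
  have "(\<Sum>k\<le>n. smult (u k - v k) (p k)) = 0"
    using eq by (simp add: smult_diff_left sum_subtractf)
  from basis_zero[OF deg nz this k] show ?thesis by simp
qed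

theorem proposition4:
  fixes r :: nat
    and \<mu> :: "nat \<Rightarrow> real measure"
    and a b :: "(nat \<Rightarrow> nat) \<Rightarrow> nat \<Rightarrow> real"
    and path :: "nat \<Rightarrow> (nat \<Rightarrow> nat)"
    and idx :: "nat \<Rightarrow> nat"
    and J :: "nat \<Rightarrow> nat \<Rightarrow> real"
  assumes r_pos: "r \<ge> 1"
    and borel: "\<And>j. j \<in> {1..r} \<Longrightarrow> sets (\<mu> j) = sets borel"
    and moments: "\<And>j k. j \<in> {1..r} \<Longrightarrow> integrable (\<mu> j) (\<lambda>x. x ^ k)"
    and perfect: "perfect_system \<mu> r"
    and a_zero: "\<And>n j. n \<in> mindex r \<Longrightarrow> j \<in> {1..r} \<Longrightarrow> n j = 0 \<Longrightarrow> a n j = 0"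
    and nnrr: "\<And>n k. n \<in> mindex r \<Longrightarrow> k \<in> {1..r} \<Longrightarrow>
        [:0, 1:] * mop \<mu> r n
          = mop \<mu> r (\<lambda>i. n i + unitv k i) + smult (b n k) (mop \<mu> r n)
            + (\<Sum>j=1..r. smult (a n j) (mop \<mu> r (\<lambda>i. n i - unitv j i)))"
    and path0: "path 0 = (\<lambda>_. 0)"
    and path_step: "\<And>l. idx l \<in> {1..r} \<and> path (Suc l) = (\<lambda>i. path l i + unitv (idx l) i)"
    and J_def: "\<And>l. [:0, 1:] * mop \<mu> r (path l)
                   = (\<Sum>k\<le>Suc l. smult (J l k) (mop \<mu> r (path k)))"
    and J_zero: "\<And>l k. k > Suc l \<Longrightarrow> J l k = 0"
    and a_bdd: "\<exists>A. \<forall>i\<in>{1..r}. \<forall>l. \<bar>a (path l) i\<bar> \<le> A"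
    and b_bdd: "\<exists>B. \<forall>i\<in>{1..r}. \<forall>n\<in>mindex r. \<bar>b n i\<bar> \<le> B"
  shows "\<forall>R::real. R \<ge> 0 \<longrightarrow>
           (\<exists>C. \<forall>i j. \<bar>real i - real j\<bar> \<le> R \<longrightarrow> \<bar>J i j\<bar> \<le> C)"
proof -
  obtain A where A: "\<And>i l. i \<in> {1..r} \<Longrightarrow> \<bar>a (path l) i\<bar> \<le> A" using a_bdd by blast
  obtain B where B: "\<And>i n. i \<in> {1..r} \<Longrightarrow> n \<in> mindex r \<Longrightarrow> \<bar>b n i\<bar> \<le> B" using b_bdd by blast
  have r1: "1 \<in> {1..r}" using r_pos by simp
  have A0: "A \<ge> 0" using A[OF r1, of 0] by simp
  have z: "(\<lambda>_. 0::nat) \<in> mindex r" by (simp add: mindex_def)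
  have B0: "B \<ge> 0" using B[OF r1 z] by simp
  define p where "p k = mop \<mu> r (path k)" for k
  have pm: "path l \<in> mindex r \<and> mlen r (path l) = l" for l
  proof (induction l)
    case 0 then show ?case by (simp add: path0 mindex_def mlen_def)
  next
    case (Suc l)
    have ir: "idx l \<in> {1..r}" and ps: "path (Suc l) = (\<lambda>i. path l i + unitv (idx l) i)"
      using path_step by auto
    have "mlen r (path (Suc l)) = (\<Sum>i=1..r. path l i) + (\<Sum>i=1..r. unitv (idx l) i)"
      by (simp add: ps mlen_def sum.distrib)
    also have "(\<Sum>i=1..r. unitv (idx l) i) = 1"
      using ir by (simp add: unitv_def)
    finally show ?case using Suc ir by (auto simp: ps mindex_def mlen_def unitv_def)
  qed
  have mop_ok: "is_type2_mop \<mu> r n (mop \<mu> r n)" if "n \<in> mindex r" for n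
    using perfect that unfolding perfect_system_def mop_def by (metis theI')
  have degp: "degree (p k) = k" for k
    using mop_ok[OF pm[THEN conjunct1]] pm unfolding p_def is_type2_mop_def by metis
  have nzp: "p k \<noteq> 0" for k
    using mop_ok[OF pm[THEN conjunct1, of k]] unfolding p_def is_type2_mop_def by auto
  have rec: "\<forall>j\<in>{1..r}. path l j \<ge> 1 \<longrightarrow> (\<exists>c. mop \<mu> r (\<lambda>i. path l i - unitv j i) = (\<Sum>k<l. smult (c k) (p k))
      \<and> (\<forall>k<l. \<bar>c k\<bar> \<le> (2*B)^(l-1-k)))" for l
  proof (induction l)
    case 0 then show ?case by (simp add: path0)
  next
    case (Suc l)
    have ir: "idx l \<in> {1..r}" and ps: "path (Suc l) = (\<lambda>i. path l i + unitv (idx l) i)"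
      using path_step by auto
    show ?case
    proof (intro ballI impI)
      fix j assume jr: "j \<in> {1..r}" and pj: "path (Suc l) j \<ge> 1"
      show "\<exists>c. mop \<mu> r (\<lambda>i. path (Suc l) i - unitv j i) = (\<Sum>k<Suc l. smult (c k) (p k))
      \<and> (\<forall>k<Suc l. \<bar>c k\<bar> \<le> (2*B)^(Suc l-1-k))"
      proof (cases "j = idx l")
        case True
        have e: "(\<lambda>i. path (Suc l) i - unitv j i) = path l" using True by (auto simp: ps)
        show ?thesis
          by (rule exI[of _ "\<lambda>k. if k = l then 1 else 0"]) (auto simp: e p_def B0)
      next
        case False
        have plj: "path l j \<ge> 1" using pj False by (simp add: ps unitv_def)
        define q where "q = (\<lambda>i. path l i - unitv j i)"
        have qm: "q \<in> mindex r" using pm[of l] by (auto simp: q_def mindex_def)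
        have e1: "(\<lambda>i. q i + unitv (idx l) i) = (\<lambda>i. path (Suc l) i - unitv j i)"
          using plj False by (auto simp: q_def ps unitv_def)
        have e2: "(\<lambda>i. q i + unitv j i) = path l"
          using plj by (auto simp: q_def unitv_def)
        note n1 = nnrr[OF qm ir] and n2 = nnrr[OF qm jr]
        have "mop \<mu> r (\<lambda>i. q i + unitv (idx l) i) + smult (b q (idx l)) (mop \<mu> r q)
            = mop \<mu> r (\<lambda>i. q i + unitv j i) + smult (b q j) (mop \<mu> r q)"
          by (rule add_right_imp_eq[OF trans[OF n1[symmetric] n2]])
        hence d0: "mop \<mu> r (\<lambda>i. q i + unitv (idx l) i)
            = mop \<mu> r (\<lambda>i. q i + unitv j i) + smult (b q j - b q (idx l)) (mop \<mu> r q)"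
          unfolding smult_diff_left by (rule aux_eq)
        have d: "mop \<mu> r (\<lambda>i. path (Suc l) i - unitv j i) = p l + smult (b q j - b q (idx l)) (mop \<mu> r q)"
          using d0 unfolding e1 e2 p_def .
        obtain c where c: "mop \<mu> r q = (\<Sum>k<l. smult (c k) (p k))" and cb: "\<forall>k<l. \<bar>c k\<bar> \<le> (2*B)^(l-1-k)"
          using Suc.IH jr plj unfolding q_def by blast
        have bd: "\<bar>b q j - b q (idx l)\<bar> \<le> 2*B" using B[OF jr qm] B[OF ir qm] by linarith
        show ?thesis
        proof (rule exI[of _ "\<lambda>k. if k = l then 1 else (b q j - b q (idx l)) * c k"], intro conjI allI impI)
          show "mop \<mu> r (\<lambda>i. path (Suc l) i - unitv j i) = (\<Sum>k<Suc l. smult (if k = l then 1 else (b q j - b q (idx l)) * c k) (p k))"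
          proof -
            have "(\<Sum>k<Suc l. smult (if k = l then 1 else (b q j - b q (idx l)) * c k) (p k))
               = (\<Sum>k<l. smult ((b q j - b q (idx l)) * c k) (p k)) + p l"
              unfolding sum.lessThan_Suc by (auto intro!: sum.cong)
            also have "\<dots> = p l + smult (b q j - b q (idx l)) (mop \<mu> r q)"
              unfolding c smult_sum2 smult_smult by (rule add.commute)
            finally show ?thesis using d by simp
          qed
        next
          fix k assume k: "k < Suc l"
          show "\<bar>if k = l then 1 else (b q j - b q (idx l)) * c k\<bar> \<le> (2*B)^(Suc l-1-k)"
          proof (cases "k = l")
            case True then show ?thesis by simp
          next
            case False
            hence kl: "k < l" using k by simp
            have "\<bar>(b q j - b q (idx l)) * c k\<bar> \<le> (2*B) * (2*B)^(l-1-k)"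
              unfolding abs_mult by (rule mult_mono[OF bd cb[rule_format, OF kl]]) (auto simp: B0)
            also have "\<dots> = (2*B)^(Suc l-1-k)" using kl
              proof -
              have "Suc l - 1 - k = Suc (l-1-k)" using kl by simp
              then show ?thesis by (simp only: power_Suc)
            qed
            finally show ?thesis using False by simp
          qed
        qed
      qed
    qed
  qed
  define P where "P l j c \<longleftrightarrow> smult (a (path l) j) (mop \<mu> r (\<lambda>i. path l i - unitv j i))
      = (\<Sum>k<l. smult (a (path l) j * c k) (p k)) \<and> (\<forall>k<l. \<bar>c k\<bar> \<le> (2*B)^(l-1-k))" for l j c
  have ex: "\<exists>c. P l j c" if jr: "j \<in> {1..r}" for l j
  proof (cases "path l j = 0")
    case True
    have "a (path l) j = 0" using a_zero[OF pm[THEN conjunct1] jr True] .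
    then show ?thesis unfolding P_def by (intro exI[of _ "\<lambda>_. 0"]) (simp add: B0)
  next
    case False
    then obtain c where c: "mop \<mu> r (\<lambda>i. path l i - unitv j i) = (\<Sum>k<l. smult (c k) (p k))"
      and cb: "\<forall>k<l. \<bar>c k\<bar> \<le> (2*B)^(l-1-k)" using rec[of l] jr by fastforce
    show ?thesis unfolding P_def
      using cb by (intro exI[of _ c] conjI) (simp_all add: c smult_sum2)
  qed
  define cc where "cc l j = (SOME c. P l j c)" for l j
  have cc: "P l j (cc l j)" if "j \<in> {1..r}" for l j
    unfolding cc_def using ex[OF that] by (rule someI_ex)
  define d where "d l k = (if k = Suc l then 1 else if k = l then b (path l) (idx l)
      else (\<Sum>j=1..r. a (path l) j * cc l j k))" for l k
  have Jd: "J l k = d l k" if "k \<le> Suc l" for l k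
  proof -
    have ir: "idx l \<in> {1..r}" and ps: "path (Suc l) = (\<lambda>i. path l i + unitv (idx l) i)"
      using path_step by auto
    have n: "[:0, 1:] * p l = p (Suc l) + smult (b (path l) (idx l)) (p l)
        + (\<Sum>j=1..r. smult (a (path l) j) (mop \<mu> r (\<lambda>i. path l i - unitv j i)))"
      using nnrr[OF pm[THEN conjunct1] ir] unfolding p_def ps .
    have "(\<Sum>j=1..r. smult (a (path l) j) (mop \<mu> r (\<lambda>i. path l i - unitv j i)))
        = (\<Sum>j=1..r. \<Sum>k<l. smult (a (path l) j * cc l j k) (p k))"
      using cc unfolding P_def by (intro sum.cong) auto
    also have "\<dots> = (\<Sum>k<l. \<Sum>j=1..r. smult (a (path l) j * cc l j k) (p k))"
      by (rule sum.swap)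
    also have "\<dots> = (\<Sum>k<l. smult (d l k) (p k))"
      unfolding d_def by (intro sum.cong) (auto simp: smult_sum)
    finally have s1: "(\<Sum>j=1..r. smult (a (path l) j) (mop \<mu> r (\<lambda>i. path l i - unitv j i)))
        = (\<Sum>k<l. smult (d l k) (p k))" .
    have s2: "(\<Sum>k\<le>Suc l. smult (d l k) (p k)) = (\<Sum>k<l. smult (d l k) (p k)) + smult (d l l) (p l) + smult (d l (Suc l)) (p (Suc l))"
      unfolding sum.atMost_Suc lessThan_Suc_atMost[symmetric] sum.lessThan_Suc ..
    have "(\<Sum>k\<le>Suc l. smult (J l k) (p k)) = (\<Sum>k\<le>Suc l. smult (d l k) (p k))"
      using J_def[of l] n s1 s2 unfolding p_def[symmetric] by (simp add: d_def algebra_simps)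
    from basis_unique[OF degp nzp this that] show ?thesis .
  qed
  have dbd: "\<bar>d l k\<bar> \<le> r * A * (2*B)^(l-1-k)" if "k < l" for l k
  proof -
    have "\<bar>d l k\<bar> = \<bar>\<Sum>j=1..r. a (path l) j * cc l j k\<bar>" using that by (simp add: d_def)
    also have "\<dots> \<le> (\<Sum>j=1..r. \<bar>a (path l) j * cc l j k\<bar>)" by (rule sum_abs)
    also have "\<dots> \<le> (\<Sum>j=1..r. A * (2*B)^(l-1-k))"
    proof (rule sum_mono)
      fix j assume jr: "j \<in> {1..r}"
      have "\<bar>cc l j k\<bar> \<le> (2*B)^(l-1-k)" using cc[OF jr, of l] that unfolding P_def by blast
      then show "\<bar>a (path l) j * cc l j k\<bar> \<le> A * (2*B)^(l-1-k)"
        unfolding abs_mult by (rule mult_mono[OF A[OF jr]]) (auto simp: A0)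
    qed
    also have "\<dots> = r * A * (2*B)^(l-1-k)" by simp
    finally show ?thesis .
  qed
  show ?thesis
  proof (intro allI impI)
    fix R :: real assume R: "R \<ge> 0"
    define N where "N = nat \<lceil>R\<rceil>"
    define M where "M = max 1 (2*B)"
    show "\<exists>C. \<forall>i j. \<bar>real i - real j\<bar> \<le> R \<longrightarrow> \<bar>J i j\<bar> \<le> C"
    proof (intro exI[of _ "1 + B + r * A * M^N"] allI impI)
      fix i j assume ij: "\<bar>real i - real j\<bar> \<le> R"
      have M1: "M \<ge> 1" unfolding M_def by simp
      have Mp: "0 \<le> r * A * M^N" using A0 M1 by simp
      consider "j > Suc i" | "j = Suc i" | "j = i" | "j < i" by linarith
      then show "\<bar>J i j\<bar> \<le> 1 + B + r * A * M^N"
      proof cases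
        case 1 then show ?thesis using J_zero[OF 1] B0 Mp by simp
      next
        case 2 then show ?thesis using Jd[of j i] B0 Mp by (simp add: d_def)
      next
        case 3
        have "\<bar>b (path i) (idx i)\<bar> \<le> B" using B[OF _ pm[THEN conjunct1]] path_step by blast
        then show ?thesis using 3 Jd[of j i] Mp by (simp add: d_def)
      next
        case 4
        have "i - 1 - j \<le> N" using ij 4 R unfolding N_def by linarith
        have "(2*B)^(i-1-j) \<le> M^(i-1-j)" unfolding M_def by (rule power_mono) (auto simp: B0)
        also have "\<dots> \<le> M^N" by (rule power_increasing[OF \<open>i - 1 - j \<le> N\<close> M1])
        finally have "r * A * (2*B)^(i-1-j) \<le> r * A * M^N" using A0 by (simp add: mult_left_mono)
        then have "\<bar>J i j\<bar> \<le> r * A * M^N" using Jd[of j i] dbd[OF 4] 4 by simp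
        then show ?thesis using B0 by simp
      qed
    qed
  qed
qed

end
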